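(* Let $M\ge\frac52$, $\mu=\frac{2}{2M+3}$, and consider Algorithm A run on an input whose optimal offline makespan is $1$. Fix any optimal offline schedule $S$ of the entire input (makespan $1$), and for each $j$ let $o_{j2}$ be the total size of those jobs among $1,\dots,j$ that $S$ assigns to $m_2$. Then for every $j\ge 0$, $y_j\ge \min\{1-\mu,\,o_{j2}\}$.
   Context: Model (two hierarchical machines with migration, bin stretching). Jobs $1,2,\dots,n$ arrive one by one ($n$ unknown in advance). Job $j$ has a size $p_j>0$ and a grade of service (GoS) $g_j\in\{1,2\}$; a job of GoS $1$ may only be processed on machine $m_1$, a job of GoS $2$ may be processed on $m_1$ or on $m_2$. The load of a machine is the total size of the jobs assigned to it, and the makespan is the maximum load. When job $j$ arrives, the algorithm must assign it to a machine, and at the same time it may reassign (migrate) previously arrived jobs to other machines (respecting the GoS constraints), provided that the total size of the migrated jobs is at most $M\cdot p_j$; $M\ge 0$ is the migration factor. Bin stretching: the optimal offline makespan of the complete input is known in advance and scaled to $1$. Notation: $Y_{j}$ is the set of jobs on $m_2$ just after job $j$ has been handled (including migrations), $y_j$ its total size, $y_0=0$. $Z$ denotes the set of GoS-2 jobs currently on $m_1$. Algorithm A (with $\mu=\frac{2}{2M+3}$). On arrival of job $j$: (i) if $g_j=1$ or $y_{j-1}\ge 1-\mu$, assign $j$ to $m_1$; (ii) else if $y_{j-1}+p_j\le 1+\mu$, assign $j$ to $m_2$; (iii) otherwise, among all GoS-2 jobs arrived so far (the current $Z$, the current $Y_{j-1}$, and $j$), choose a subset $W$ of maximum total size subject to total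 size at most $1$; rearrange so that exactly the jobs of $W$ are on $m_2$ and all other arrived jobs are on $m_1$. *)

theory Defs
  imports Complex_Main
begin

text \<open>Jobs are numbered 1..n; p j is the size, g j the grade of service (1 or 2).
  A schedule is a function assigning each job a machine index 1 or 2.\<close>

definition load :: "(nat \<Rightarrow> real) \<Rightarrow> nat \<Rightarrow> (nat \<Rightarrow> nat) \<Rightarrow> nat \<Rightarrow> real" where
  "load p n S m = (\<Sum>j \<in> {j \<in> {1..n}. S j = m}. p j)"

definition feasible_schedule :: "(nat \<Rightarrow> nat) \<Rightarrow> nat \<Rightarrow> (nat \<Rightarrow> nat) \<Rightarrow> bool" where
  "feasible_schedule g n S \<longleftrightarrow> (\<forall>j \<in> {1..n}. S j \<in> {1, 2} \<and> (g j = 1 \<longrightarrow> S j = 1))"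

definition makespan :: "(nat \<Rightarrow> real) \<Rightarrow> nat \<Rightarrow> (nat \<Rightarrow> nat) \<Rightarrow> real" where
  "makespan p n S = max (load p n S 1) (load p n S 2)"

definition opt_is_one :: "(nat \<Rightarrow> real) \<Rightarrow> (nat \<Rightarrow> nat) \<Rightarrow> nat \<Rightarrow> bool" where
  "opt_is_one p g n \<longleftrightarrow>
     (\<exists>S. feasible_schedule g n S \<and> makespan p n S = 1) \<and>
     (\<forall>S. feasible_schedule g n S \<longrightarrow> makespan p n S \<ge> 1)"

definition mu :: "real \<Rightarrow> real" where
  "mu M = 2 / (2 * M + 3)"

text \<open>One step of Algorithm A: job j arrives; Yprev is the set of jobs on m2 before,
  Ynew the set of jobs on m2 afterwards (all other arrived jobs are on m1).\<close>
definition alg_step :: "real \<Rightarrow> (nat \<Rightarrow> real) \<Rightarrow> (nat \<Rightarrow> nat) \<Rightarrow> nat \<Rightarrow> nat set \<Rightarrow> nat set \<Rightarrow> bool" where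
  "alg_step M p g j Yprev Ynew \<longleftrightarrow>
     (let y = (\<Sum>i\<in>Yprev. p i);
          Z = {i \<in> {1..<j}. g i = 2 \<and> i \<notin> Yprev};
          C = Z \<union> Yprev \<union> {j}
      in if g j = 1 \<or> y \<ge> 1 - mu M then Ynew = Yprev
         else if y + p j \<le> 1 + mu M then Ynew = insert j Yprev
         else (Ynew \<subseteq> C \<and> (\<Sum>i\<in>Ynew. p i) \<le> 1 \<and>
               (\<forall>W \<subseteq> C. (\<Sum>i\<in>W. p i) \<le> 1 \<longrightarrow> (\<Sum>i\<in>W. p i) \<le> (\<Sum>i\<in>Ynew. p i))))"

text \<open>Y is a run of Algorithm A on jobs 1..n: Y j is the set of jobs on m2 after job j
  has been handled (including migrations).\<close>
definition alg_run :: "real \<Rightarrow> (nat \<Rightarrow> real) \<Rightarrow> (nat \<Rightarrow> nat) \<Rightarrow> nat \<Rightarrow> (nat \<Rightarrow> nat set) \<Rightarrow> bool" where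
  "alg_run M p g n Y \<longleftrightarrow> Y 0 = {} \<and> (\<forall>j \<in> {1..n}. alg_step M p g j (Y (j - 1)) (Y j))"

end

theory Submission
  imports Defs
begin

lemma run_step:
  assumes a: "alg_run M p g n Y" and b: "Suc k \<le> n"
  shows "alg_step M p g (Suc k) (Y k) (Y (Suc k))"
proof -
  have "Suc k \<in> {1..n}" using b by simp
  then have "alg_step M p g (Suc k) (Y (Suc k - 1)) (Y (Suc k))"
    using a unfolding alg_run_def by blast
  then show ?thesis by simp
qed

lemma Y_sub:
  assumes "alg_run M p g n Y" "\<forall>j \<in> {1..n}. g j \<in> {1, 2}"
  shows "k \<le> n \<Longrightarrow> Y k \<subseteq> {1..k}"
proof (induction k)
  case 0 then show ?case using assms(1) by (simp add: alg_run_def)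
next
  case (Suc k)
  have IH: "Y k \<subseteq> {1..k}" using Suc by simp
  have st: "alg_step M p g (Suc k) (Y k) (Y (Suc k))"
    using run_step[OF assms(1)] Suc.prems by simp
  have IH': "Y k \<subseteq> {1..Suc k}" using IH by auto
  have C: "{i \<in> {1..<Suc k}. g i = 2 \<and> i \<notin> Y k} \<union> Y k \<union> {Suc k} \<subseteq> {1..Suc k}"
    apply (rule Un_least)+
      apply force
     apply (rule IH')
    apply simp
    done
  show ?case
  proof (cases "g (Suc k) = 1 \<or> (\<Sum>i\<in>Y k. p i) \<ge> 1 - mu M")
    case True then show ?thesis using st IH' by (simp add: alg_step_def Let_def)
  next
    case F: False
    show ?thesis
    proof (cases "(\<Sum>i\<in>Y k. p i) + p (Suc k) \<le> 1 + mu M")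
      case True then show ?thesis using st IH' F by (simp add: alg_step_def Let_def)
    next
      case False
      then have "Y (Suc k) \<subseteq> {i \<in> {1..<Suc k}. g i = 2 \<and> i \<notin> Y k} \<union> Y k \<union> {Suc k}"
        using st F unfolding alg_step_def Let_def by simp
      then show ?thesis using C by blast
    qed
  qed
qed

lemma oo_step:
  "(\<Sum>i \<in> {i \<in> {1..Suc k}. S i = 2}. p i) =
   (\<Sum>i \<in> {i \<in> {1..k}. S i = 2}. p i) + (if S (Suc k) = 2 then p (Suc k) else (0::real))"
proof -
  have "{i \<in> {1..Suc k}. S i = 2} =
        (if S (Suc k) = 2 then insert (Suc k) {i \<in> {1..k}. S i = 2} else {i \<in> {1..k}. S i = 2})"
    by (auto simp: le_Suc_eq)
  then show ?thesis by simp
qed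

theorem mainTheorem2:
  fixes M :: real and p :: "nat \<Rightarrow> real" and g :: "nat \<Rightarrow> nat" and n :: nat
    and Y :: "nat \<Rightarrow> nat set" and S :: "nat \<Rightarrow> nat"
  assumes "M \<ge> 5 / 2"
    and "\<forall>j \<in> {1..n}. p j > 0"
    and "\<forall>j \<in> {1..n}. g j \<in> {1, 2}"
    and "opt_is_one p g n"
    and "alg_run M p g n Y"
    and "feasible_schedule g n S" and "makespan p n S = 1"
  shows "\<forall>j \<le> n. (\<Sum>i\<in>Y j. p i) \<ge> min (1 - mu M) (\<Sum>i \<in> {i \<in> {1..j}. S i = 2}. p i)"
proof (intro allI impI)
  fix j assume "j \<le> n"
  then show "(\<Sum>i\<in>Y j. p i) \<ge> min (1 - mu M) (\<Sum>i \<in> {i \<in> {1..j}. S i = 2}. p i)"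
  proof (induction j)
    case 0 then show ?case using assms(5) by (simp add: alg_run_def)
  next
    case (Suc k)
    define oo where "oo = (\<Sum>i \<in> {i \<in> {1..k}. S i = 2}. p i)"
    define T where "T = {i \<in> {1..Suc k}. S i = 2}"
    have IH: "(\<Sum>i\<in>Y k. p i) \<ge> min (1 - mu M) oo" using Suc oo_def by simp
    have os: "(\<Sum>i\<in>T. p i) = oo + (if S (Suc k) = 2 then p (Suc k) else 0)"
      unfolding T_def oo_def by (rule oo_step)
    have Yk: "Y k \<subseteq> {1..k}" using Y_sub[OF assms(5) assms(3)] Suc.prems by simp
    have nk: "Suc k \<notin> Y k" using Yk by auto
    have fin: "finite (Y k)" using Yk finite_subset by blast
    have pj: "p (Suc k) > 0" using assms(2) Suc.prems by simp
    have st: "alg_step M p g (Suc k) (Y k) (Y (Suc k))"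
      using run_step[OF assms(5)] Suc.prems by simp
    have feas: "\<forall>j \<in> {1..n}. S j \<in> {1, 2} \<and> (g j = 1 \<longrightarrow> S j = 1)"
      using assms(6) by (simp add: feasible_schedule_def)
    have Tsub: "T \<subseteq> {j \<in> {1..n}. S j = 2}" using Suc.prems by (auto simp: T_def)
    have Tle: "(\<Sum>i\<in>T. p i) \<le> 1"
    proof -
      have "(\<Sum>i\<in>T. p i) \<le> (\<Sum>i\<in>{j \<in> {1..n}. S j = 2}. p i)"
        by (rule sum_mono2) (use Tsub assms(2) in \<open>auto simp: less_imp_le\<close>)
      also have "\<dots> = load p n S 2" by (simp add: load_def)
      also have "\<dots> \<le> 1" using assms(7) by (simp add: makespan_def)
      finally show ?thesis .
    qed
    show ?case
    proof (cases "g (Suc k) = 1 \<or> (\<Sum>i\<in>Y k. p i) \<ge> 1 - mu M")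
      case True
      then have YY: "Y (Suc k) = Y k" using st by (simp add: alg_step_def Let_def)
      show ?thesis
      proof (cases "g (Suc k) = 1")
        case True
        then have "S (Suc k) = 1" using feas Suc.prems by auto
        then show ?thesis using IH os YY by (simp add: T_def)
      next
        case False
        then show ?thesis using True YY by simp
      qed
    next
      case False
      note F = False
      show ?thesis
      proof (cases "(\<Sum>i\<in>Y k. p i) + p (Suc k) \<le> 1 + mu M")
        case True
        then have YY: "Y (Suc k) = insert (Suc k) (Y k)" using st F by (simp add: alg_step_def Let_def)
        have "(\<Sum>i\<in>Y (Suc k). p i) = (\<Sum>i\<in>Y k. p i) + p (Suc k)"
          using YY nk fin by simp
        then show ?thesis using IH os pj unfolding T_def by (auto split: if_splits)
      next
        case False
        have g2: "g (Suc k) = 2" using F assms(3) Suc.prems by auto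
        let ?C = "{i \<in> {1..<Suc k}. g i = 2 \<and> i \<notin> Y k} \<union> Y k \<union> {Suc k}"
        have opt: "\<forall>W \<subseteq> ?C. (\<Sum>i\<in>W. p i) \<le> 1 \<longrightarrow> (\<Sum>i\<in>W. p i) \<le> (\<Sum>i\<in>Y (Suc k). p i)"
          using st F False by (simp add: alg_step_def Let_def)
        have "T \<subseteq> ?C"
        proof
          fix i assume "i \<in> T"
          then have i: "i \<in> {1..Suc k}" "S i = 2" by (auto simp: T_def)
          then have "g i = 2" using feas assms(3) Suc.prems by force
          then show "i \<in> ?C" using i by (auto simp: le_Suc_eq)
        qed
        then have "(\<Sum>i\<in>T. p i) \<le> (\<Sum>i\<in>Y (Suc k). p i)" using opt Tle by blast
        then show ?thesis by (simp add: T_def)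
      qed
    qed
  qed
qed

end
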